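(* Let $n,m\ge1$, $V_1=\mathbb{C}^n$, $V_2=\mathbb{C}^m$. Let $\mathscr{Z}$ be an equidimensional subspace arrangement of codimension $k$ in $V_1$ and $\mathscr{C}_0\supseteq\mathscr{Z}$ a reduced complete intersection subspace arrangement of codimension $k$ in $V_1$, with $\mathcal{I}_{\mathscr{C}_0}=(h_1,\dots,h_k)\subseteq S^1=\mathbb{C}[x_1,\dots,x_n]$ radical, $(h_1,\dots,h_k)$ a homogeneous regular sequence. Then $\mathscr{C}_0\times V_2$ is a reduced complete intersection subspace arrangement of codimension $k$ in $V_1\times V_2$ (defined by $h_1\otimes1,\dots,h_k\otimes1$) containing $\mathscr{Z}\times V_2$, and for all $q\in\mathbb{N}$, $\Omega^q(\log(\mathscr{Z}\times V_2/\mathscr{C}_0\times V_2))=\sum_{j=0}^q\Omega^j(\log\mathscr{Z}/\mathscr{C}_0)\otimes\Omega^{q-j}[V_2]$, where $\Omega^{p}[V_2]$ is the module of polynomial $p$-forms on $V_2$ and the right-hand side is viewed inside $\frac1h\Omega^q[V_1\times V_2]$.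
   Context: For a vector space $W$, $\Omega^q[W]$ denotes polynomial differential $q$-forms on $W$. For an equidimensional subspace arrangement $\mathscr{Z}$ of codimension $k$ in $W$ (finite set of linear subspaces, identified with union, radical ideal $\mathcal{I}_\mathscr{Z}$) and a reduced complete intersection arrangement $\mathscr{C}\supseteq\mathscr{Z}$ of codimension $k$ with $\mathcal{I}_\mathscr{C}=(h_1,\dots,h_k)$ radical, homogeneous regular sequence, $h=h_1\cdots h_k$: $\Omega^q(\log\mathscr{Z}/\mathscr{C})=\{\omega\in\frac1h\Omega^q[W]:\ \mathcal{I}_\mathscr{Z}\omega\subseteq\frac1h\mathcal{I}_\mathscr{C}\Omega^q[W],\ d(\mathcal{I}_\mathscr{Z})\wedge\omega\subseteq\frac1h\mathcal{I}_\mathscr{C}\Omega^{q+1}[W]\}$. *)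

theory Defs
  imports Complex_Main "HOL-Library.Poly_Mapping"
begin

text \<open>The polynomial ring of C^N is the subring of
  polynomials whose variables lie in {..<N}.  Points of C^N are functions nat to complex
  vanishing at indices >= N.\<close>

type_synonym mpoly = "(nat \<Rightarrow>\<^sub>0 nat) \<Rightarrow>\<^sub>0 complex"

definition pvars :: "mpoly \<Rightarrow> nat set" where
  "pvars p = (\<Union>a\<in>Poly_Mapping.keys p. Poly_Mapping.keys (a :: nat \<Rightarrow>\<^sub>0 nat))"

definition peval :: "mpoly \<Rightarrow> (nat \<Rightarrow> complex) \<Rightarrow> complex" where
  "peval p x = (\<Sum>a\<in>Poly_Mapping.keys p. Poly_Mapping.lookup p a * (\<Prod>i\<in>Poly_Mapping.keys a. x i ^ Poly_Mapping.lookup a i))"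

definition mdeg :: "(nat \<Rightarrow>\<^sub>0 nat) \<Rightarrow> nat" where
  "mdeg a = (\<Sum>i\<in>Poly_Mapping.keys a. Poly_Mapping.lookup a i)"

definition homogeneous :: "mpoly \<Rightarrow> bool" where
  "homogeneous p \<longleftrightarrow> (\<exists>d. \<forall>a\<in>Poly_Mapping.keys p. mdeg a = d)"

definition pdiff :: "nat \<Rightarrow> mpoly \<Rightarrow> mpoly" where
  "pdiff i p = (\<Sum>a\<in>Poly_Mapping.keys p. Poly_Mapping.single (a - Poly_Mapping.single i 1)
                                (Poly_Mapping.lookup p a * of_nat (Poly_Mapping.lookup a i)))"

definition polys :: "nat \<Rightarrow> mpoly set" where
  "polys N = {p. pvars p \<subseteq> {..<N}}"

definition cspace :: "nat \<Rightarrow> (nat \<Rightarrow> complex) set" where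
  "cspace N = {x. \<forall>i\<ge>N. x i = 0}"

definition van_ideal :: "nat \<Rightarrow> (nat \<Rightarrow> complex) set \<Rightarrow> mpoly set" where
  "van_ideal N Z = {f \<in> polys N. \<forall>x\<in>Z. peval f x = 0}"

definition gen_ideal :: "nat \<Rightarrow> (nat \<Rightarrow> mpoly) \<Rightarrow> nat \<Rightarrow> mpoly set" where
  "gen_ideal N hs k = {p. \<exists>g. (\<forall>i<k. g i \<in> polys N) \<and> p = (\<Sum>i<k. g i * hs i)}"

definition radical_ideal :: "nat \<Rightarrow> mpoly set \<Rightarrow> bool" where
  "radical_ideal N I \<longleftrightarrow> (\<forall>f r. f \<in> polys N \<longrightarrow> 0 < r \<longrightarrow> f ^ r \<in> I \<longrightarrow> f \<in> I)"

definition regular_seq :: "nat \<Rightarrow> (nat \<Rightarrow> mpoly) \<Rightarrow> nat \<Rightarrow> bool" where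
  "regular_seq N hs k \<longleftrightarrow>
     (\<forall>i<k. hs i \<in> polys N) \<and> 1 \<notin> gen_ideal N hs k \<and>
     (\<forall>i<k. \<forall>g\<in>polys N. g * hs i \<in> gen_ideal N hs i \<longrightarrow> g \<in> gen_ideal N hs i)"

definition lin_subspace :: "nat \<Rightarrow> (nat \<Rightarrow> complex) set \<Rightarrow> bool" where
  "lin_subspace N L \<longleftrightarrow> L \<subseteq> cspace N \<and> (\<lambda>_. 0) \<in> L \<and>
     (\<forall>x\<in>L. \<forall>y\<in>L. (\<lambda>i. x i + y i) \<in> L) \<and> (\<forall>c. \<forall>x\<in>L. (\<lambda>i. c * x i) \<in> L)"

definition has_dim :: "(nat \<Rightarrow> complex) set \<Rightarrow> nat \<Rightarrow> bool" where
  "has_dim L d \<longleftrightarrow> (\<exists>v :: nat \<Rightarrow> nat \<Rightarrow> complex.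
      (\<forall>i<d. v i \<in> L) \<and>
      (\<forall>c. (\<forall>j. (\<Sum>i<d. c i * v i j) = 0) \<longrightarrow> (\<forall>i<d. c i = 0)) \<and>
      L = {x. \<exists>c. x = (\<lambda>j. \<Sum>i<d. c i * v i j)})"

definition subspace_arrangement :: "nat \<Rightarrow> nat \<Rightarrow> (nat \<Rightarrow> complex) set \<Rightarrow> bool" where
  "subspace_arrangement N k Z \<longleftrightarrow> k \<le> N \<and>
     (\<exists>A. finite A \<and> A \<noteq> {} \<and> (\<forall>L\<in>A. lin_subspace N L \<and> has_dim L (N - k)) \<and> Z = \<Union>A)"

definition reduced_CI :: "nat \<Rightarrow> nat \<Rightarrow> (nat \<Rightarrow> complex) set \<Rightarrow> (nat \<Rightarrow> mpoly) \<Rightarrow> bool" where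
  "reduced_CI N k C hs \<longleftrightarrow> subspace_arrangement N k C \<and>
     van_ideal N C = gen_ideal N hs k \<and> radical_ideal N (gen_ideal N hs k) \<and>
     regular_seq N hs k \<and> (\<forall>i<k. homogeneous (hs i))"

text \<open>Z \<times> V_2 inside C^(n+m) = C^n \<times> C^m (first n coordinates for V_1)\<close>
definition prod_set :: "nat \<Rightarrow> nat \<Rightarrow> (nat \<Rightarrow> complex) set \<Rightarrow> (nat \<Rightarrow> complex) set" where
  "prod_set n m Z = {x \<in> cspace (n + m). (\<lambda>i. if i < n then x i else 0) \<in> Z}"

text \<open>A form assigns to each finite set I of variable indices the coefficient of
  dx_I = dx_(i_1) \<and> ... \<and> dx_(i_q), i_1 < ... < i_q.\<close>

type_synonym pform = "nat set \<Rightarrow> mpoly"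

definition forms_on :: "nat set \<Rightarrow> nat \<Rightarrow> pform set" where
  "forms_on V q = {\<omega>. \<forall>I. (\<omega> I \<noteq> 0 \<longrightarrow> I \<subseteq> V \<and> finite I \<and> card I = q) \<and> pvars (\<omega> I) \<subseteq> V}"

definition wsign :: "nat set \<Rightarrow> nat set \<Rightarrow> mpoly" where
  "wsign I J = (- 1) ^ card {(i, j). i \<in> I \<and> j \<in> J \<and> j < i}"

definition wedge :: "pform \<Rightarrow> pform \<Rightarrow> pform" where
  "wedge \<alpha> \<beta> K = (\<Sum>I\<in>Pow K. wsign I (K - I) * \<alpha> I * \<beta> (K - I))"

definition dpoly :: "mpoly \<Rightarrow> pform" where
  "dpoly f I = (if card I = 1 then pdiff (the_elem I) f else 0)"

text \<open>Numerators of logarithmic forms: eta \<in> log_num N Z C q iff eta/h \<in>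
  Omega^q(log Z/C), where h = h_1 \<cdots> h_k and I_C = van_ideal N C.\<close>
definition log_num :: "nat \<Rightarrow> (nat \<Rightarrow> complex) set \<Rightarrow> (nat \<Rightarrow> complex) set \<Rightarrow> nat \<Rightarrow> pform set" where
  "log_num N Z C q = {\<eta> \<in> forms_on {..<N} q.
      (\<forall>f\<in>van_ideal N Z. \<forall>I. f * \<eta> I \<in> van_ideal N C) \<and>
      (\<forall>f\<in>van_ideal N Z. \<forall>K. wedge (dpoly f) \<eta> K \<in> van_ideal N C)}"

text \<open>Numerators of sum_(j=0..q) Omega^j(log Z/C) \<otimes> Omega^(q-j)[V_2] inside
  (1/h) Omega^q[V_1 \<times> V_2]: finite sums of wedge products.\<close>
definition tensor_num :: "nat \<Rightarrow> nat \<Rightarrow> (nat \<Rightarrow> complex) set \<Rightarrow> (nat \<Rightarrow> complex) set \<Rightarrow> nat \<Rightarrow> pform set" where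
  "tensor_num n m Z C q = {\<omega>. \<exists>ps :: (nat \<times> pform \<times> pform) list.
      (\<forall>(j, \<alpha>, \<beta>) \<in> set ps. j \<le> q \<and> \<alpha> \<in> log_num n Z C j \<and> \<beta> \<in> forms_on {n..<n+m} (q - j)) \<and>
      \<omega> = (\<lambda>K. sum_list (map (\<lambda>(j, \<alpha>, \<beta>). wedge \<alpha> \<beta> K) ps))}"

end

theory Submission
  imports Defs
begin

lemma poly_expand: "(p::'a \<Rightarrow>\<^sub>0 'b::comm_monoid_add) = (\<Sum>a\<in>Poly_Mapping.keys p. Poly_Mapping.single a (Poly_Mapping.lookup p a))"
  by (rule poly_mapping_eqI) (simp add: lookup_sum lookup_single when_def in_keys_iff sum.delta' split: if_splits)

definition mon :: "(nat \<Rightarrow>\<^sub>0 nat) \<Rightarrow> (nat \<Rightarrow> complex) \<Rightarrow> complex" where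
  "mon a x = (\<Prod>i\<in>Poly_Mapping.keys a. x i ^ Poly_Mapping.lookup a i)"

lemma mon_superset: "finite S \<Longrightarrow> Poly_Mapping.keys a \<subseteq> S \<Longrightarrow> mon a x = (\<Prod>i\<in>S. x i ^ Poly_Mapping.lookup a i)"
  unfolding mon_def by (rule prod.mono_neutral_left) (auto simp: in_keys_iff)

lemma mon_add: "mon (a + b) x = mon a x * mon b x"
proof -
  let ?S = "Poly_Mapping.keys a \<union> Poly_Mapping.keys b"
  have "mon (a+b) x = (\<Prod>i\<in>?S. x i ^ Poly_Mapping.lookup (a+b) i)"
    by (rule mon_superset) (auto simp: keys_add)
  also have "\<dots> = (\<Prod>i\<in>?S. x i ^ Poly_Mapping.lookup a i) * (\<Prod>i\<in>?S. x i ^ Poly_Mapping.lookup b i)"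
    by (simp add: lookup_add power_add prod.distrib)
  also have "\<dots> = mon a x * mon b x"
    using mon_superset[of ?S a x] mon_superset[of ?S b x] by simp
  finally show ?thesis .
qed

lemma mon_zero[simp]: "mon 0 x = 1" by (simp add: mon_def)

lemma mon_single: "mon (Poly_Mapping.single v e) x = x v ^ e"
  by (simp add: mon_def)

lemma mon_cong: "(\<And>i. i \<in> Poly_Mapping.keys a \<Longrightarrow> x i = y i) \<Longrightarrow> mon a x = mon a y"
  unfolding mon_def by (rule prod.cong) auto

lemma peval_mono: "peval p x = (\<Sum>a\<in>Poly_Mapping.keys p. Poly_Mapping.lookup p a * mon a x)"
  by (simp add: peval_def mon_def)

lemma peval_superset: "finite S \<Longrightarrow> Poly_Mapping.keys p \<subseteq> S \<Longrightarrow> peval p x = (\<Sum>a\<in>S. Poly_Mapping.lookup p a * mon a x)"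
  unfolding peval_mono by (rule sum.mono_neutral_left) (auto simp: in_keys_iff)

lemma peval_add: "peval (p + q) x = peval p x + peval q x"
proof -
  let ?S = "Poly_Mapping.keys p \<union> Poly_Mapping.keys q"
  have "peval (p+q) x = (\<Sum>a\<in>?S. Poly_Mapping.lookup (p+q) a * mon a x)"
    by (rule peval_superset) (auto simp: keys_add)
  also have "\<dots> = peval p x + peval q x"
    using peval_superset[of ?S p x] peval_superset[of ?S q x] by (simp add: lookup_add distrib_right sum.distrib)
  finally show ?thesis .
qed

lemma peval_zero[simp]: "peval 0 x = 0" by (simp add: peval_def)

lemma peval_sum: "peval (\<Sum>i\<in>A. f i) x = (\<Sum>i\<in>A. peval (f i) x)"
  by (induction A rule: infinite_finite_induct) (auto simp: peval_add)

lemma peval_single: "peval (Poly_Mapping.single a c) x = c * mon a x"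
  by (simp add: peval_mono)

lemma peval_mult: "peval (p * q) x = peval p x * peval q x"
proof -
  have "p * q = (\<Sum>a\<in>Poly_Mapping.keys p. \<Sum>b\<in>Poly_Mapping.keys q.
          Poly_Mapping.single (a + b) (Poly_Mapping.lookup p a * Poly_Mapping.lookup q b))"
    apply (subst poly_expand[of p], subst poly_expand[of q])
    by (simp add: sum_distrib_left sum_distrib_right mult_single) (rule sum.swap)
  then have "peval (p*q) x = (\<Sum>a\<in>Poly_Mapping.keys p. \<Sum>b\<in>Poly_Mapping.keys q.
          Poly_Mapping.lookup p a * Poly_Mapping.lookup q b * (mon a x * mon b x))"
    by (simp add: peval_sum peval_single mon_add)
  also have "\<dots> = peval p x * peval q x"
    unfolding peval_mono sum_product by (simp add: mult_ac)
  finally show ?thesis .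
qed

lemma peval_one[simp]: "peval 1 x = 1"
  by (metis peval_single single_one mon_zero mult_1)

lemma peval_power: "peval (p ^ r) x = peval p x ^ r"
  by (induction r) (auto simp: peval_mult)

lemma peval_uminus: "peval (- p) x = - peval p x"
  by (metis add.right_inverse add_eq_0_iff peval_add peval_zero)

lemma peval_cong: "(\<And>i. i \<in> pvars p \<Longrightarrow> x i = y i) \<Longrightarrow> peval p x = peval p y"
  unfolding peval_mono pvars_def by (intro sum.cong refl arg_cong[where f="(*) _"] mon_cong) auto

lemma pvars_add: "pvars (p + q) \<subseteq> pvars p \<union> pvars q"
  unfolding pvars_def using keys_add[of p q] by auto

lemma pvars_zero[simp]: "pvars 0 = {}" by (simp add: pvars_def)

lemma pvars_sum: "pvars (\<Sum>i\<in>A. f i) \<subseteq> (\<Union>i\<in>A. pvars (f i))"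
  by (induction A rule: infinite_finite_induct) (use pvars_add in auto)

lemma pvars_single: "pvars (Poly_Mapping.single a c) \<subseteq> Poly_Mapping.keys a"
  by (simp add: pvars_def)

lemma pvars_mult: "pvars (p * q) \<subseteq> pvars p \<union> pvars q"
proof
  fix i assume "i \<in> pvars (p*q)"
  then obtain c where c: "c \<in> Poly_Mapping.keys (p*q)" "i \<in> Poly_Mapping.keys c" unfolding pvars_def by auto
  then obtain a b where "c = a + b" "a \<in> Poly_Mapping.keys p" "b \<in> Poly_Mapping.keys q" using keys_mult by blast
  then show "i \<in> pvars p \<union> pvars q" using c keys_add[of a b] unfolding pvars_def by auto
qed

lemma pvars_uminus[simp]: "pvars (- p) = pvars p"
  unfolding pvars_def by (simp add: keys.rep_eq)

lemma pvars_one[simp]: "pvars 1 = {}"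
  using pvars_single[of 0 "1::complex"] by simp

lemma pvars_power: "pvars (p ^ r) \<subseteq> pvars p"
  by (induction r) (use pvars_mult in auto)

lemma pvars_const: "pvars (Poly_Mapping.single 0 c) = {}"
  using pvars_single[of 0 c] by simp

lemma polys_add: "p \<in> polys N \<Longrightarrow> q \<in> polys N \<Longrightarrow> p + q \<in> polys N"
  unfolding polys_def using pvars_add by blast
lemma polys_mult: "p \<in> polys N \<Longrightarrow> q \<in> polys N \<Longrightarrow> p * q \<in> polys N"
  unfolding polys_def using pvars_mult by blast
lemma polys_zero[simp]: "0 \<in> polys N" by (simp add: polys_def)
lemma polys_one[simp]: "1 \<in> polys N" by (simp add: polys_def)
lemma polys_uminus: "p \<in> polys N \<Longrightarrow> - p \<in> polys N" by (simp add: polys_def)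
lemma polys_power: "p \<in> polys N \<Longrightarrow> p ^ r \<in> polys N"
  unfolding polys_def using pvars_power by blast
lemma polys_sum: "(\<And>i. i \<in> A \<Longrightarrow> f i \<in> polys N) \<Longrightarrow> (\<Sum>i\<in>A. f i) \<in> polys N"
  unfolding polys_def using pvars_sum by blast
lemma polys_mono: "N \<le> M \<Longrightarrow> p \<in> polys N \<Longrightarrow> p \<in> polys M"
  unfolding polys_def by auto
lemma polys_const: "Poly_Mapping.single 0 c \<in> polys N"
  by (simp add: polys_def pvars_const)
lemma polys_single: "Poly_Mapping.keys a \<subseteq> {..<N} \<Longrightarrow> Poly_Mapping.single a c \<in> polys N"
  unfolding polys_def using pvars_single by blast
lemma wsign_polys: "wsign I J \<in> polys N"
  unfolding wsign_def by (intro polys_power polys_uminus polys_one)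
lemma polys_of_nat: "of_nat k \<in> polys N"
  by (metis single_of_nat polys_const)

lemma peval_restr:
  assumes "p \<in> polys n"
  shows "peval p x = peval p (\<lambda>i. if i < n then x i else 0)"
  using assms unfolding polys_def by (intro peval_cong) auto

abbreviation lk where "lk \<equiv> Poly_Mapping.lookup"
abbreviation ks where "ks \<equiv> Poly_Mapping.keys"
abbreviation sg where "sg \<equiv> Poly_Mapping.single"

lemma lookup_const_mult: "lk (sg 0 s * (P::mpoly)) c = s * lk P c"
  by (simp flip: mult_map_scale_conv_mult add: map.rep_eq when_def)

lemma of_nat_mult_lookup: "lk (of_nat k * (P::mpoly)) c = of_nat k * lk P c"
  by (metis lookup_const_mult single_of_nat)

definition xpart :: "nat \<Rightarrow> (nat \<Rightarrow>\<^sub>0 nat) \<Rightarrow> (nat \<Rightarrow>\<^sub>0 nat)" where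
  "xpart n a = Abs_poly_mapping (\<lambda>i. if i < n then lk a i else 0)"
definition ypart :: "nat \<Rightarrow> (nat \<Rightarrow>\<^sub>0 nat) \<Rightarrow> (nat \<Rightarrow>\<^sub>0 nat)" where
  "ypart n a = Abs_poly_mapping (\<lambda>i. if i < n then 0 else lk a i)"

lemma lookup_xpart: "lk (xpart n a) i = (if i < n then lk a i else 0)"
proof -
  have "finite {i. (if i < n then lk a i else 0) \<noteq> 0}"
    by (rule finite_subset[of _ "ks a"]) (auto simp: in_keys_iff)
  then show ?thesis unfolding xpart_def by simp
qed
lemma lookup_ypart: "lk (ypart n a) i = (if i < n then 0 else lk a i)"
proof -
  have "finite {i. (if i < n then 0 else lk a i) \<noteq> 0}"
    by (rule finite_subset[of _ "ks a"]) (auto simp: in_keys_iff)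
  then show ?thesis unfolding ypart_def by simp
qed

lemma xy_split: "xpart n a + ypart n a = a"
  by (rule poly_mapping_eqI) (simp add: lookup_add lookup_xpart lookup_ypart)
lemma keys_xpart: "ks (xpart n a) \<subseteq> ks a \<inter> {..<n}"
  by (auto simp: in_keys_iff lookup_xpart split: if_splits)
lemma keys_ypart: "ks (ypart n a) \<subseteq> ks a - {..<n}"
  by (auto simp: in_keys_iff lookup_ypart split: if_splits)
lemma xpart_add: "xpart n (a + b) = xpart n a + xpart n b"
  by (rule poly_mapping_eqI) (simp add: lookup_add lookup_xpart)
lemma ypart_add: "ypart n (a + b) = ypart n a + ypart n b"
  by (rule poly_mapping_eqI) (simp add: lookup_add lookup_ypart)
lemma xpart_id: "ks a \<subseteq> {..<n} \<Longrightarrow> xpart n a = a"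
  by (rule poly_mapping_eqI) (auto simp: lookup_xpart in_keys_iff)
lemma ypart_zero: "ks a \<subseteq> {..<n} \<Longrightarrow> ypart n a = 0"
  by (rule poly_mapping_eqI) (auto simp: lookup_ypart in_keys_iff)
lemma ypart_id: "\<forall>i\<in>ks a. n \<le> i \<Longrightarrow> ypart n a = a"
  by (rule poly_mapping_eqI) (metis in_keys_iff lookup_ypart not_le)
lemma xpart_zero: "\<forall>i\<in>ks a. n \<le> i \<Longrightarrow> xpart n a = 0"
  by (rule poly_mapping_eqI) (metis in_keys_iff lookup_xpart lookup_zero not_le)

lemma split_unique:
  assumes "ks d \<subseteq> {..<n}" "\<forall>i\<in>ks b. n \<le> i"
  shows "(a = d + b) \<longleftrightarrow> (ypart n a = b \<and> xpart n a = d)"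
proof
  assume "a = d + b" then show "ypart n a = b \<and> xpart n a = d"
    using assms by (simp add: xpart_add ypart_add xpart_id ypart_zero ypart_id xpart_zero)
next
  assume "ypart n a = b \<and> xpart n a = d" then show "a = d + b"
    using xy_split[of n a] by simp
qed

definition cf :: "nat \<Rightarrow> (nat \<Rightarrow>\<^sub>0 nat) \<Rightarrow> mpoly \<Rightarrow> mpoly" where
  "cf n b p = Abs_poly_mapping (\<lambda>c. if ks c \<subseteq> {..<n} \<and> (\<forall>i\<in>ks b. n \<le> i) then lk p (c + b) else 0)"

lemma lookup_cf: "lk (cf n b p) c = (if ks c \<subseteq> {..<n} \<and> (\<forall>i\<in>ks b. n \<le> i) then lk p (c + b) else 0)"
proof -
  have "{c. (if ks c \<subseteq> {..<n} \<and> (\<forall>i\<in>ks b. n \<le> i) then lk p (c + b) else 0) \<noteq> 0} \<subseteq> (\<lambda>a. a - b) ` ks p"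
  proof
    fix c assume "c \<in> {c. (if ks c \<subseteq> {..<n} \<and> (\<forall>i\<in>ks b. n \<le> i) then lk p (c + b) else 0) \<noteq> 0}"
    then have "c + b \<in> ks p" by (auto simp: in_keys_iff split: if_splits)
    then show "c \<in> (\<lambda>a. a - b) ` ks p" by (intro image_eqI[of _ _ "c+b"]) auto
  qed
  then have "finite {c. (if ks c \<subseteq> {..<n} \<and> (\<forall>i\<in>ks b. n \<le> i) then lk p (c + b) else 0) \<noteq> 0}"
    by (rule finite_subset) simp
  then show ?thesis unfolding cf_def by simp
qed

lemma cf_add: "cf n b (p + q) = cf n b p + cf n b q"
  by (rule poly_mapping_eqI) (simp add: lookup_cf lookup_add)
lemma cf_zero[simp]: "cf n b 0 = 0"
  by (rule poly_mapping_eqI) (simp add: lookup_cf)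
lemma cf_sum: "cf n b (\<Sum>i\<in>A. f i) = (\<Sum>i\<in>A. cf n b (f i))"
  by (induction A rule: infinite_finite_induct) (auto simp: cf_add)

lemma cf_single: "cf n b (sg a c) = (if ypart n a = b then sg (xpart n a) c else 0)"
proof (rule poly_mapping_eqI)
  fix d
  show "lk (cf n b (sg a c)) d = lk (if ypart n a = b then sg (xpart n a) c else 0) d"
  proof (cases "ks d \<subseteq> {..<n} \<and> (\<forall>i\<in>ks b. n \<le> i)")
    case True
    then have "(a = d + b) \<longleftrightarrow> (ypart n a = b \<and> xpart n a = d)" using split_unique by blast
    then show ?thesis using True by (auto simp: lookup_cf lookup_single when_def)
  next
    case False
    have "ypart n a = b \<Longrightarrow> xpart n a = d \<Longrightarrow> False"
      using False keys_xpart[of n a] keys_ypart[of n a] by auto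
    then show ?thesis using False by (auto simp: lookup_cf lookup_single when_def)
  qed
qed

lemma cf_mult:
  assumes "p \<in> polys n"
  shows "cf n b (p * q) = p * cf n b q"
proof -
  have kp: "\<And>a. a \<in> ks p \<Longrightarrow> ks a \<subseteq> {..<n}" using assms unfolding polys_def pvars_def by auto
  have "p * q = (\<Sum>a\<in>ks p. \<Sum>a'\<in>ks q. sg (a + a') (lk p a * lk q a'))"
    apply (subst poly_expand[of p], subst poly_expand[of q])
    by (simp add: sum_distrib_left sum_distrib_right mult_single) (rule sum.swap)
  then have "cf n b (p * q) = (\<Sum>a\<in>ks p. \<Sum>a'\<in>ks q. cf n b (sg (a + a') (lk p a * lk q a')))"
    by (simp add: cf_sum)
  also have "\<dots> = (\<Sum>a\<in>ks p. \<Sum>a'\<in>ks q. sg a (lk p a) * cf n b (sg a' (lk q a')))"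
    by (intro sum.cong refl) (simp add: cf_single kp ypart_add xpart_add ypart_zero xpart_id mult_single)
  also have "\<dots> = (\<Sum>a\<in>ks p. sg a (lk p a)) * cf n b (\<Sum>a'\<in>ks q. sg a' (lk q a'))"
    by (simp add: cf_sum sum_distrib_left sum_distrib_right) (rule sum.swap)
  also have "\<dots> = p * cf n b q"
    by (simp only: poly_expand[symmetric])
  finally show ?thesis .
qed

lemma keys_cf: "c \<in> ks (cf n b p) \<Longrightarrow> ks c \<subseteq> {..<n}"
  by (metis in_keys_iff lookup_cf)
lemma cf_polys: "cf n b p \<in> polys n"
  unfolding polys_def pvars_def using keys_cf by blast

lemma cf_decomp:
  assumes "finite B" "ypart n ` ks p \<subseteq> B"
  shows "p = (\<Sum>b\<in>B. sg b 1 * cf n b p)"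
proof -
  have "(\<Sum>b\<in>B. sg b 1 * cf n b p) = (\<Sum>a\<in>ks p. \<Sum>b\<in>B. sg b 1 * cf n b (sg a (lk p a)))"
    apply (subst (1) poly_expand[of p])
    by (simp add: cf_sum sum_distrib_left) (rule sum.swap)
  also have "\<dots> = (\<Sum>a\<in>ks p. sg a (lk p a))"
  proof (intro sum.cong refl)
    fix a assume a: "a \<in> ks p"
    have "(\<Sum>b\<in>B. sg b 1 * cf n b (sg a (lk p a))) = (\<Sum>b\<in>B. if ypart n a = b then sg (ypart n a + xpart n a) (lk p a) else 0)"
      by (intro sum.cong refl) (auto simp: cf_single mult_single)
    also have "\<dots> = sg a (lk p a)"
      using assms a by (auto simp: sum.delta add.commute xy_split)
    finally show "(\<Sum>b\<in>B. sg b 1 * cf n b (sg a (lk p a))) = sg a (lk p a)" .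
  qed
  also have "\<dots> = p" by (rule poly_expand[symmetric])
  finally show ?thesis by simp
qed

lemma cf_notin: "b \<notin> ypart n ` ks p \<Longrightarrow> cf n b p = 0"
proof (rule poly_mapping_eqI, rule ccontr)
  fix c assume b: "b \<notin> ypart n ` ks p" and "lk (cf n b p) c \<noteq> lk 0 c"
  then have c: "ks c \<subseteq> {..<n}" "\<forall>i\<in>ks b. n \<le> i" "c + b \<in> ks p"
    by (auto simp: lookup_cf in_keys_iff split: if_splits)
  then have "ypart n (c + b) = b" using split_unique by blast
  then show False using b c by (metis image_eqI)
qed

lemma cf_one: "cf n 0 1 = 1"
  using cf_single[of n 0 0 1] by (simp add: xpart_zero ypart_id)

lemma ypart_keys_polys:
  assumes "p \<in> polys N" "b \<in> ypart n ` ks p"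
  shows "ks b \<subseteq> {n..<N}"
  using assms keys_ypart unfolding polys_def pvars_def by fastforce

lemma minus_single_eq:
  fixes a c :: "nat \<Rightarrow>\<^sub>0 nat"
  assumes "0 < lk a i"
  shows "(a - sg i 1 = c) \<longleftrightarrow> (a = c + sg i 1)"
proof
  assume h: "a - sg i 1 = c"
  show "a = c + sg i 1"
  proof (rule poly_mapping_eqI)
    fix j
    have "lk c j = lk a j - (if i = j then 1 else 0)" using h[symmetric] by (simp add: lookup_minus lookup_single when_def)
    then show "lk a j = lk (c + sg i 1) j" using assms
      by (auto simp: lookup_add lookup_single)
  qed
next
  assume "a = c + sg i 1" then show "a - sg i 1 = c"
    by (auto intro!: poly_mapping_eqI simp: lookup_add lookup_minus lookup_single when_def)
qed

lemma lookup_pdiff: "lk (pdiff i p) c = of_nat (lk c i + 1) * lk p (c + sg i 1)"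
proof -
  have "lk (pdiff i p) c = (\<Sum>a\<in>ks p. (lk p a * of_nat (lk a i) when a - sg i 1 = c))"
    by (simp add: pdiff_def lookup_sum lookup_single)
  also have "\<dots> = (\<Sum>a\<in>ks p. if a = c + sg i 1 then lk p a * of_nat (lk a i) else 0)"
  proof (intro sum.cong refl)
    fix a show "(lk p a * of_nat (lk a i) when a - sg i 1 = c) = (if a = c + sg i 1 then lk p a * of_nat (lk a i) else 0)"
    proof (cases "lk a i = 0")
      case True
      then have "a \<noteq> c + sg i 1" by (auto simp: lookup_add)
      then show ?thesis using True by (simp add: when_def)
    next
      case False then show ?thesis using minus_single_eq[of a i c] by (simp add: when_def)
    qed
  qed
  also have "\<dots> = of_nat (lk c i + 1) * lk p (c + sg i 1)"
    by (auto simp: sum.delta in_keys_iff lookup_add)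
  finally show ?thesis .
qed

lemma pdiff_add: "pdiff i (p + q) = pdiff i p + pdiff i q"
  by (rule poly_mapping_eqI) (simp add: lookup_pdiff lookup_add distrib_left)
lemma pdiff_zero[simp]: "pdiff i 0 = 0"
  by (rule poly_mapping_eqI) (simp add: lookup_pdiff)

lemma pdiff_notvar: "i \<notin> pvars f \<Longrightarrow> pdiff i f = 0"
proof (rule poly_mapping_eqI, rule ccontr)
  fix c assume i: "i \<notin> pvars f" and "lk (pdiff i f) c \<noteq> lk 0 c"
  then have "c + sg i 1 \<in> ks f" by (auto simp: lookup_pdiff in_keys_iff)
  moreover have "i \<in> ks (c + sg i 1)" by (simp add: in_keys_iff lookup_add)
  ultimately show False using i unfolding pvars_def by auto
qed

lemma pvars_pdiff: "pvars (pdiff i f) \<subseteq> pvars f"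
proof
  fix j assume "j \<in> pvars (pdiff i f)"
  then obtain c where c: "c \<in> ks (pdiff i f)" "j \<in> ks c" unfolding pvars_def by auto
  then have "c + sg i 1 \<in> ks f" by (auto simp: lookup_pdiff in_keys_iff)
  moreover have "j \<in> ks (c + sg i 1)" using c by (simp add: in_keys_iff lookup_add)
  ultimately show "j \<in> pvars f" unfolding pvars_def by auto
qed

lemma polys_pdiff: "f \<in> polys N \<Longrightarrow> pdiff i f \<in> polys N"
  unfolding polys_def using pvars_pdiff by blast

lemma keys_plus_single: "ks (c + sg i (1::nat)) = insert i (ks c)"
  by (auto simp: in_keys_iff lookup_add lookup_single when_def split: if_splits)

lemma cf_pdiff_x:
  assumes "i < n"
  shows "cf n b (pdiff i f) = pdiff i (cf n b f)"
proof (rule poly_mapping_eqI)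
  fix c :: "nat \<Rightarrow>\<^sub>0 nat"
  have "ks (c + sg i 1) \<subseteq> {..<n} \<longleftrightarrow> ks c \<subseteq> {..<n}"
    unfolding keys_plus_single using assms by simp
  moreover have "\<forall>j\<in>ks b. n \<le> j \<Longrightarrow> lk b i = 0" using assms by (metis in_keys_iff not_le)
  ultimately show "lk (cf n b (pdiff i f)) c = lk (pdiff i (cf n b f)) c"
    by (auto simp: lookup_cf lookup_pdiff lookup_add ac_simps)
qed

lemma cf_pdiff_y:
  assumes "n \<le> i"
  shows "cf n b (pdiff i f) = of_nat (lk b i + 1) * cf n (b + sg i 1) f"
proof (rule poly_mapping_eqI)
  fix c :: "nat \<Rightarrow>\<^sub>0 nat"
  have "ks c \<subseteq> {..<n} \<Longrightarrow> lk c i = 0" using assms by (metis in_keys_iff lessThan_iff not_le subsetD)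
  moreover have "(\<forall>j\<in>ks (b + sg i 1). n \<le> j) \<longleftrightarrow> (\<forall>j\<in>ks b. n \<le> j)"
    unfolding keys_plus_single using assms by simp
  ultimately show "lk (cf n b (pdiff i f)) c = lk (of_nat (lk b i + 1) * cf n (b + sg i 1) f) c"
    unfolding of_nat_mult_lookup lookup_cf lookup_pdiff by (auto simp: lookup_add ac_simps)
qed

lemma gen_zero: "0 \<in> gen_ideal N hs i"
  unfolding gen_ideal_def by (auto intro!: exI[of _ "\<lambda>_. 0"])

lemma gen_add: "p \<in> gen_ideal N hs i \<Longrightarrow> q \<in> gen_ideal N hs i \<Longrightarrow> p + q \<in> gen_ideal N hs i"
  unfolding gen_ideal_def
  apply clarify
  subgoal for g g' by (rule exI[of _ "\<lambda>j. g j + g' j"]) (auto simp: polys_add distrib_right sum.distrib)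
  done

lemma gen_mult: "r \<in> polys N \<Longrightarrow> p \<in> gen_ideal N hs i \<Longrightarrow> r * p \<in> gen_ideal N hs i"
  unfolding gen_ideal_def
  apply clarify
  subgoal for g by (rule exI[of _ "\<lambda>j. r * g j"]) (auto simp: polys_mult sum_distrib_left mult.assoc)
  done

lemma gen_sum: "(\<And>a. a \<in> A \<Longrightarrow> f a \<in> gen_ideal N hs i) \<Longrightarrow> (\<Sum>a\<in>A. f a) \<in> gen_ideal N hs i"
  by (induction A rule: infinite_finite_induct) (auto simp: gen_zero gen_add)

lemma gen_polys: "(\<forall>j<i. hs j \<in> polys N) \<Longrightarrow> p \<in> gen_ideal N hs i \<Longrightarrow> p \<in> polys N"
  unfolding gen_ideal_def by (auto intro!: polys_sum polys_mult)

lemma gen_mono: "N \<le> M \<Longrightarrow> p \<in> gen_ideal N hs i \<Longrightarrow> p \<in> gen_ideal M hs i"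
  unfolding gen_ideal_def using polys_mono by blast

lemma gen_A:
  assumes hs: "\<forall>j<i. hs j \<in> polys n" and p: "p \<in> polys (n + m)"
  shows "p \<in> gen_ideal (n + m) hs i \<longleftrightarrow> (\<forall>b. cf n b p \<in> gen_ideal n hs i)"
proof
  assume "p \<in> gen_ideal (n + m) hs i"
  then obtain g where g: "\<forall>j<i. g j \<in> polys (n+m)" "p = (\<Sum>j<i. g j * hs j)"
    unfolding gen_ideal_def by auto
  show "\<forall>b. cf n b p \<in> gen_ideal n hs i"
  proof
    fix b
    have p2: "p = (\<Sum>j<i. hs j * g j)" using g(2) by (simp add: mult.commute[of "g _"])
    have "cf n b p = (\<Sum>j<i. cf n b (hs j * g j))" unfolding p2 cf_sum ..
    also have "\<dots> = (\<Sum>j<i. hs j * cf n b (g j))" by (rule sum.cong[OF refl]) (simp add: cf_mult hs)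
    also have "\<dots> = (\<Sum>j<i. cf n b (g j) * hs j)" by (rule sum.cong[OF refl]) (rule mult.commute)
    finally have "cf n b p = (\<Sum>j<i. cf n b (g j) * hs j)" .
    then show "cf n b p \<in> gen_ideal n hs i"
      unfolding gen_ideal_def using cf_polys by (intro CollectI exI[of _ "\<lambda>j. cf n b (g j)"]) auto
  qed
next
  assume c: "\<forall>b. cf n b p \<in> gen_ideal n hs i"
  let ?B = "ypart n ` ks p"
  have "p = (\<Sum>b\<in>?B. sg b 1 * cf n b p)" by (rule cf_decomp) auto
  also have "\<dots> \<in> gen_ideal (n+m) hs i"
  proof (rule gen_sum)
    fix b assume "b \<in> ?B"
    then have "ks b \<subseteq> {n..<n+m}" using ypart_keys_polys p by blast
    then have "sg b 1 \<in> polys (n+m)" by (intro polys_single) auto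
    moreover have "cf n b p \<in> gen_ideal (n+m) hs i" using c gen_mono[of n "n+m"] by auto
    ultimately show "sg b 1 * cf n b p \<in> gen_ideal (n+m) hs i" by (rule gen_mult)
  qed
  finally show "p \<in> gen_ideal (n + m) hs i" .
qed

lemma ident:
  assumes "finite V"
  shows "finite B \<Longrightarrow> (\<forall>b\<in>B. ks b \<subseteq> V) \<Longrightarrow> (\<forall>y. (\<Sum>b\<in>B. c b * mon b y) = 0) \<Longrightarrow> \<forall>b\<in>B. c b = 0"
  using assms
proof (induction V arbitrary: B c rule: finite_induct)
  case empty
  then have "B \<subseteq> {0}" by auto
  then show ?case
  proof (cases "B = {}")
    case False
    then have "B = {0}" using \<open>B \<subseteq> {0}\<close> by auto
    then show ?thesis using empty(3) by simp
  qed simp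
next
  case (insert v V)
  define clr where "clr b = Poly_Mapping.update v 0 b" for b :: "nat \<Rightarrow>\<^sub>0 nat"
  have dec: "b = clr b + sg v (lk b v)" for b
    by (rule poly_mapping_eqI) (simp add: clr_def lookup_update lookup_add lookup_single when_def)
  have monsplit: "mon b y = mon (clr b) y * y v ^ lk b v" for b y
    by (subst (1) dec) (simp add: mon_add mon_single)
  have kclr: "b \<in> B \<Longrightarrow> ks (clr b) \<subseteq> V" for b
    using insert.prems(2) by (auto simp: clr_def keys_update)
  have vnot: "v \<notin> ks (clr b)" for b by (simp add: clr_def keys_update)
  have monupd: "mon (clr b) (y(v:=t)) = mon (clr b) y" for b y t
    by (rule mon_cong) (use vnot in auto)
  define D where "D = Max (insert 0 ((\<lambda>b. lk b v) ` B))"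
  have leD: "b \<in> B \<Longrightarrow> lk b v \<le> D" for b
    unfolding D_def using insert.prems(1) by (intro Max_ge) auto
  have grp: "\<forall>e\<le>D. (\<Sum>b\<in>{b\<in>B. lk b v = e}. c b * mon (clr b) y) = 0" for y
  proof -
    let ?a = "\<lambda>e. (\<Sum>b\<in>{b\<in>B. lk b v = e}. c b * mon (clr b) y)"
    have "(\<Sum>e\<le>D. ?a e * t ^ e) = 0" for t
    proof -
      have "(\<Sum>e\<le>D. ?a e * t ^ e) = (\<Sum>e\<le>D. (\<Sum>b\<in>{b\<in>B. lk b v = e}. c b * mon (clr b) y * t ^ lk b v))"
        by (intro sum.cong refl) (auto simp: sum_distrib_right)
      also have "\<dots> = (\<Sum>b\<in>B. c b * mon (clr b) y * t ^ lk b v)"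
        by (rule sum.group) (use insert.prems(1) leD in auto)
      also have "\<dots> = (\<Sum>b\<in>B. c b * mon b (y(v:=t)))"
      proof (intro sum.cong refl)
        fix b show "c b * mon (clr b) y * t ^ lk b v = c b * mon b (y(v:=t))"
          using monsplit[of b "y(v:=t)"] monupd[of b y t] by simp
      qed
      also have "\<dots> = 0" using insert.prems(3) by blast
      finally show ?thesis .
    qed
    then show ?thesis using polyfun_eq_0[of ?a D] by blast
  qed
  show ?case
  proof
    fix b0 assume b0: "b0 \<in> B"
    define Be where "Be = {b\<in>B. lk b v = lk b0 v}"
    have inj: "inj_on clr Be"
    proof
      fix b b' assume "b \<in> Be" "b' \<in> Be" "clr b = clr b'"
      then show "b = b'" using dec[of b] dec[of b'] unfolding Be_def by auto
    qed
    define c' where "c' b' = c (inv_into Be clr b')" for b'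
    have fin: "finite (clr ` Be)" using insert.prems(1) unfolding Be_def by auto
    have "\<forall>b'\<in>clr ` Be. c' b' = 0"
    proof (rule insert.IH[OF fin])
      show "\<forall>b\<in>clr ` Be. ks b \<subseteq> V" using kclr unfolding Be_def by auto
      show "\<forall>y. (\<Sum>b\<in>clr ` Be. c' b * mon b y) = 0"
      proof
        fix y
        have "(\<Sum>b\<in>clr ` Be. c' b * mon b y) = (\<Sum>b\<in>Be. c' (clr b) * mon (clr b) y)"
          by (rule sum.reindex[OF inj, unfolded comp_def])
        also have "\<dots> = (\<Sum>b\<in>Be. c b * mon (clr b) y)"
          by (intro sum.cong refl) (simp add: c'_def inv_into_f_f[OF inj])
        also have "\<dots> = 0" using grp[of y] leD[OF b0] unfolding Be_def by blast
        finally show "(\<Sum>b\<in>clr ` Be. c' b * mon b y) = 0" .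
      qed
    qed
    moreover have "b0 \<in> Be" using b0 unfolding Be_def by simp
    ultimately show "c b0 = 0" by (auto simp: c'_def inv_into_f_f[OF inj])
  qed
qed

abbreviation rs :: "nat \<Rightarrow> (nat \<Rightarrow> complex) \<Rightarrow> (nat \<Rightarrow> complex)" where
  "rs n x \<equiv> (\<lambda>i. if i < n then x i else 0)"

lemma peval_decomp:
  assumes "p \<in> polys (n + m)"
  shows "peval p z = (\<Sum>b\<in>ypart n ` ks p. mon b z * peval (cf n b p) z)"
proof -
  have "peval p z = peval (\<Sum>b\<in>ypart n ` ks p. sg b 1 * cf n b p) z"
    using cf_decomp[of "ypart n ` ks p" n p] by simp
  then show ?thesis by (simp add: peval_sum peval_mult peval_single)
qed

lemma van_prod:
  assumes C: "C \<subseteq> cspace n" and p: "p \<in> polys (n + m)"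
  shows "(\<forall>x\<in>prod_set n m C. peval p x = 0) \<longleftrightarrow> (\<forall>b. \<forall>x\<in>C. peval (cf n b p) x = 0)"
proof
  assume h: "\<forall>b. \<forall>x\<in>C. peval (cf n b p) x = 0"
  show "\<forall>x\<in>prod_set n m C. peval p x = 0"
  proof
    fix x assume x: "x \<in> prod_set n m C"
    then have "rs n x \<in> C" unfolding prod_set_def by auto
    then have "peval (cf n b p) x = 0" for b
      using h peval_restr[OF cf_polys, of n b p x] by auto
    then show "peval p x = 0" by (simp add: peval_decomp[OF p])
  qed
next
  assume h: "\<forall>x\<in>prod_set n m C. peval p x = 0"
  show "\<forall>b. \<forall>x\<in>C. peval (cf n b p) x = 0"
  proof (intro allI ballI)
    fix b x0 assume x0: "x0 \<in> C"
    let ?B = "ypart n ` ks p"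
    show "peval (cf n b p) x0 = 0"
    proof (cases "b \<in> ?B")
      case False then show ?thesis by (simp add: cf_notin)
    next
      case True
      have "\<forall>b\<in>?B. peval (cf n b p) x0 = 0"
      proof (rule ident[of "{n..<n+m}"])
        show "\<forall>b\<in>?B. ks b \<subseteq> {n..<n+m}" using ypart_keys_polys[OF p] by blast
        show "\<forall>y. (\<Sum>b\<in>?B. peval (cf n b p) x0 * mon b y) = 0"
        proof
          fix y
          define z where "z = (\<lambda>i. if i < n then x0 i else if i < n + m then y i else 0)"
          have x0c: "x0 \<in> cspace n" using x0 C by auto
          have rz: "rs n z = x0" using x0c unfolding z_def cspace_def by (auto simp: fun_eq_iff)
          have "z \<in> prod_set n m C" using x0 rz unfolding prod_set_def cspace_def z_def by auto
          then have "0 = peval p z" using h by auto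
          also have "\<dots> = (\<Sum>b\<in>?B. mon b z * peval (cf n b p) z)" by (rule peval_decomp[OF p])
          also have "\<dots> = (\<Sum>b\<in>?B. peval (cf n b p) x0 * mon b y)"
          proof (intro sum.cong refl)
            fix b assume "b \<in> ?B"
            then have kb: "ks b \<subseteq> {n..<n+m}" using ypart_keys_polys[OF p] by blast
            have "mon b z = mon b y" by (rule mon_cong) (use kb in \<open>auto simp: z_def\<close>)
            moreover have "peval (cf n b p) z = peval (cf n b p) x0"
              using peval_restr[OF cf_polys, of n b p z] rz by simp
            ultimately show "mon b z * peval (cf n b p) z = peval (cf n b p) x0 * mon b y" by simp
          qed
          finally show "(\<Sum>b\<in>?B. peval (cf n b p) x0 * mon b y) = 0" by simp
        qed
      qed auto
      then show ?thesis using True by blast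
    qed
  qed
qed

lemma van_sub:
  assumes "f \<in> van_ideal n Z" "Z \<subseteq> cspace n"
  shows "f \<in> van_ideal (n + m) (prod_set n m Z)"
proof -
  have f: "f \<in> polys n" "\<forall>x\<in>Z. peval f x = 0" using assms unfolding van_ideal_def by auto
  have "peval f x = 0" if "x \<in> prod_set n m Z" for x
    using that f peval_restr[OF f(1), of x] unfolding prod_set_def by auto
  then show ?thesis using f polys_mono[of n "n+m"] unfolding van_ideal_def by auto
qed

lemma van_cf:
  assumes "C \<subseteq> cspace n" "p \<in> van_ideal (n + m) (prod_set n m C)"
  shows "cf n b p \<in> van_ideal n C"
  using assms van_prod[of C n p m] cf_polys unfolding van_ideal_def by blast

lemma van_eq:
  assumes C: "C \<subseteq> cspace n" and hs: "\<forall>j<k. hs j \<in> polys n"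
    and eq: "van_ideal n C = gen_ideal n hs k"
  shows "van_ideal (n + m) (prod_set n m C) = gen_ideal (n + m) hs k"
proof (intro set_eqI iffI)
  fix p assume p: "p \<in> van_ideal (n + m) (prod_set n m C)"
  then have pp: "p \<in> polys (n+m)" unfolding van_ideal_def by auto
  have "cf n b p \<in> gen_ideal n hs k" for b using van_cf[OF C p] eq by auto
  then show "p \<in> gen_ideal (n + m) hs k" using gen_A[OF hs pp] by auto
next
  fix p assume p: "p \<in> gen_ideal (n + m) hs k"
  have hs': "\<forall>j<k. hs j \<in> polys (n+m)" using hs polys_mono[of n "n+m"] by auto
  have pp: "p \<in> polys (n+m)" using gen_polys[OF hs' p] .
  have "cf n b p \<in> van_ideal n C" for b using gen_A[OF hs pp] p eq by auto
  then have "\<forall>x\<in>prod_set n m C. peval p x = 0"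
    using van_prod[OF C pp] unfolding van_ideal_def by auto
  then show "p \<in> van_ideal (n + m) (prod_set n m C)" using pp unfolding van_ideal_def by auto
qed

lemma prod_lin:
  assumes L: "lin_subspace n L"
  shows "lin_subspace (n+m) (prod_set n m L)"
proof -
  have Lc: "L \<subseteq> cspace n" and L0: "(\<lambda>_. 0) \<in> L"
    and La: "\<forall>x\<in>L. \<forall>y\<in>L. (\<lambda>i. x i + y i) \<in> L" and Ls: "\<forall>c. \<forall>x\<in>L. (\<lambda>i. c * x i) \<in> L"
    using L unfolding lin_subspace_def by auto
  have 1: "(\<lambda>_. 0) \<in> prod_set n m L"
  proof -
    have "rs n (\<lambda>_. 0) = (\<lambda>_. 0)" by auto
    then show ?thesis using L0 unfolding prod_set_def cspace_def by auto
  qed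
  have 2: "(\<lambda>i. x i + y i) \<in> prod_set n m L" if "x \<in> prod_set n m L" "y \<in> prod_set n m L" for x y
  proof -
    have "rs n (\<lambda>i. x i + y i) = (\<lambda>i. rs n x i + rs n y i)" by auto
    then show ?thesis using that La unfolding prod_set_def cspace_def by auto
  qed
  have 3: "(\<lambda>i. c * x i) \<in> prod_set n m L" if "x \<in> prod_set n m L" for x c
  proof -
    have "rs n (\<lambda>i. c * x i) = (\<lambda>i. c * rs n x i)" by auto
    then show ?thesis using that Ls unfolding prod_set_def cspace_def by auto
  qed
  show ?thesis unfolding lin_subspace_def using 1 2 3 unfolding prod_set_def by blast
qed

lemma sum_unit_part:
  fixes m d n j :: nat and c :: "nat \<Rightarrow> complex"
  shows "(\<Sum>t<m. c (d + t) * (if j = n + t then 1 else 0)) = (if n \<le> j \<and> j < n + m then c (d + (j - n)) else (0::complex))"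
  by (induction m) auto

lemma prod_dim:
  assumes L: "lin_subspace n L" and hd: "has_dim L d"
  shows "has_dim (prod_set n m L) (d + m)"
proof -
  obtain v where v: "\<forall>i<d. v i \<in> L" "\<forall>c. (\<forall>j. (\<Sum>i<d. c i * v i j) = 0) \<longrightarrow> (\<forall>i<d. c i = 0)"
    "L = {x. \<exists>c. x = (\<lambda>j. \<Sum>i<d. c i * v i j)}"
    using hd unfolding has_dim_def by blast
  have Lc: "L \<subseteq> cspace n" using L unfolding lin_subspace_def by auto
  have vz: "i < d \<Longrightarrow> n \<le> j \<Longrightarrow> v i j = 0" for i j using v(1) Lc unfolding cspace_def by auto
  define w where "w i = (if i < d then v i else (\<lambda>j. if j = n + (i - d) then 1 else 0))" for i
  have split: "(\<Sum>i<d+m. c i * w i j) = (\<Sum>i<d. c i * v i j) + (if n \<le> j \<and> j < n + m then c (d + (j - n)) else 0)" for c j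
  proof -
    have "(\<Sum>i<d+m. c i * w i j) = (\<Sum>i<d. c i * v i j) + (\<Sum>t<m. c (d + t) * (if j = n + t then 1 else 0))"
      by (induction m) (auto simp: w_def)
    then show ?thesis by (simp add: sum_unit_part)
  qed
  have vsum0: "n \<le> j \<Longrightarrow> (\<Sum>i<d. c i * v i j) = 0" for c j by (simp add: vz)
  show ?thesis unfolding has_dim_def
  proof (intro exI[of _ w] conjI allI impI)
    fix i assume i: "i < d + m"
    show "w i \<in> prod_set n m L"
    proof (cases "i < d")
      case True
      then have "v i \<in> L" using v(1) by auto
      moreover have "rs n (v i) = v i" using vz True by (auto simp: fun_eq_iff)
      ultimately show ?thesis using True Lc unfolding prod_set_def w_def cspace_def by auto
    next
      case False
      have "rs n (w i) = (\<lambda>_. 0)" using False by (auto simp: w_def fun_eq_iff)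
      moreover have "(\<lambda>_. 0) \<in> L" using L unfolding lin_subspace_def by auto
      moreover have "w i \<in> cspace (n+m)" using False i by (auto simp: w_def cspace_def)
      ultimately show ?thesis unfolding prod_set_def by simp
    qed
  next
    fix c :: "nat \<Rightarrow> complex" and i
    assume h: "\<forall>j. (\<Sum>i<d+m. c i * w i j) = 0" and i: "i < d + m"
    have hy: "c (d + t) = 0" if "t < m" for t
      using h[rule_format, of "n + t"] that by (simp add: split vsum0)
    have "\<forall>j. (\<Sum>i<d. c i * v i j) = 0"
    proof
      fix j show "(\<Sum>i<d. c i * v i j) = 0"
        using h[rule_format, of j] hy[of "j - n"] by (simp add: split split: if_splits)
    qed
    then have "\<forall>i<d. c i = 0" using v(2) by blast
    then show "c i = 0" using hy[of "i - d"] i by (cases "i < d") auto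
  next
    show "prod_set n m L = {x. \<exists>c. x = (\<lambda>j. \<Sum>i<d+m. c i * w i j)}"
    proof (intro set_eqI iffI)
      fix x assume x: "x \<in> prod_set n m L"
      then have "rs n x \<in> L" and xc: "x \<in> cspace (n+m)" unfolding prod_set_def by auto
      then obtain c where c: "rs n x = (\<lambda>j. \<Sum>i<d. c i * v i j)" using v(3) by auto
      define c' where "c' i = (if i < d then c i else x (n + (i - d)))" for i
      have "x = (\<lambda>j. \<Sum>i<d+m. c' i * w i j)"
      proof
        fix j
        have e: "(\<Sum>i<d. c' i * v i j) = (\<Sum>i<d. c i * v i j)" by (simp add: c'_def)
        show "x j = (\<Sum>i<d+m. c' i * w i j)"
        proof (cases "j < n")
          case True
          then show ?thesis using fun_cong[OF c, of j] by (simp add: split e)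
        next
          case False
          then show ?thesis using xc by (auto simp: split e vsum0 c'_def cspace_def)
        qed
      qed
      then show "x \<in> {x. \<exists>c. x = (\<lambda>j. \<Sum>i<d+m. c i * w i j)}" by blast
    next
      fix x assume "x \<in> {x. \<exists>c. x = (\<lambda>j. \<Sum>i<d+m. c i * w i j)}"
      then obtain c where c: "x = (\<lambda>j. \<Sum>i<d+m. c i * w i j)" by auto
      have "x \<in> cspace (n+m)" unfolding cspace_def c by (auto simp: split vsum0)
      moreover have "rs n x = (\<lambda>j. \<Sum>i<d. c i * v i j)"
        unfolding c by (auto simp: fun_eq_iff split vsum0)
      ultimately show "x \<in> prod_set n m L" using v(3) unfolding prod_set_def by auto
    qed
  qed
qed

lemma arr_cspace: "subspace_arrangement n k C \<Longrightarrow> C \<subseteq> cspace n"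
  unfolding subspace_arrangement_def lin_subspace_def by auto

lemma prod_arr:
  assumes "subspace_arrangement n k C"
  shows "subspace_arrangement (n+m) k (prod_set n m C)"
proof -
  obtain A where A: "k \<le> n" "finite A" "A \<noteq> {}" "\<forall>L\<in>A. lin_subspace n L \<and> has_dim L (n - k)" "C = \<Union>A"
    using assms unfolding subspace_arrangement_def by blast
  have "prod_set n m C = \<Union>(prod_set n m ` A)" unfolding A(5) prod_set_def by auto
  moreover have "\<forall>L'\<in>prod_set n m ` A. lin_subspace (n+m) L' \<and> has_dim L' (n + m - k)"
  proof
    fix L' assume "L' \<in> prod_set n m ` A"
    then obtain L where L: "L \<in> A" "L' = prod_set n m L" by auto
    have "n + m - k = (n - k) + m" using A(1) by simp
    then show "lin_subspace (n+m) L' \<and> has_dim L' (n + m - k)"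
      using L A(4) prod_lin prod_dim by metis
  qed
  ultimately show ?thesis unfolding subspace_arrangement_def using A(1-3)
    by (intro conjI exI[of _ "prod_set n m ` A"]) auto
qed

lemma conj1:
  assumes "reduced_CI n k C0 hs"
  shows "reduced_CI (n+m) k (prod_set n m C0) hs"
proof -
  have arr: "subspace_arrangement n k C0" and eq: "van_ideal n C0 = gen_ideal n hs k"
    and reg: "regular_seq n hs k" and hom: "\<forall>i<k. homogeneous (hs i)"
    using assms unfolding reduced_CI_def by auto
  have C: "C0 \<subseteq> cspace n" using arr arr_cspace by blast
  have hs: "\<forall>j<k. hs j \<in> polys n" using reg unfolding regular_seq_def by auto
  have hs': "\<forall>j<k. hs j \<in> polys (n+m)" using hs polys_mono[of n "n+m"] by auto
  have eq': "van_ideal (n + m) (prod_set n m C0) = gen_ideal (n + m) hs k" by (rule van_eq[OF C hs eq])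
  have rad: "radical_ideal (n+m) (gen_ideal (n+m) hs k)"
    unfolding radical_ideal_def eq'[symmetric] van_ideal_def by (auto simp: peval_power)
  have one: "1 \<notin> gen_ideal (n+m) hs k"
  proof
    assume "1 \<in> gen_ideal (n+m) hs k"
    then have "cf n 0 1 \<in> gen_ideal n hs k" using gen_A[OF hs, of 1 m] by simp
    then show False using reg cf_one unfolding regular_seq_def by simp
  qed
  have nzd: "g \<in> gen_ideal (n+m) hs i" if i: "i < k" and g: "g \<in> polys (n+m)" and gh: "g * hs i \<in> gen_ideal (n+m) hs i" for i g
  proof -
    have hsi: "\<forall>j<i. hs j \<in> polys n" using hs i by auto
    have hi: "hs i \<in> polys n" using hs i by auto
    have "g * hs i \<in> polys (n+m)" using g hs' i by (auto intro: polys_mult)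
    then have "cf n b (g * hs i) \<in> gen_ideal n hs i" for b using gen_A[OF hsi] gh by blast
    then have "cf n b g * hs i \<in> gen_ideal n hs i" for b
      by (metis cf_mult hi mult.commute)
    then have "cf n b g \<in> gen_ideal n hs i" for b
      using reg i cf_polys unfolding regular_seq_def by blast
    then show ?thesis using gen_A[OF hsi g] by blast
  qed
  have "regular_seq (n+m) hs k" unfolding regular_seq_def using hs' one nzd by blast
  then show ?thesis unfolding reduced_CI_def using prod_arr[OF arr] eq' rad hom by blast
qed

definition pure :: "nat set \<Rightarrow> pform \<Rightarrow> bool" where
  "pure V \<omega> \<longleftrightarrow> (\<forall>I. \<omega> I \<noteq> 0 \<longrightarrow> I \<subseteq> V)"

lemma forms_pure: "\<omega> \<in> forms_on V q \<Longrightarrow> pure V \<omega>"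
  unfolding forms_on_def pure_def by blast

lemma forms_polys: "\<omega> \<in> forms_on {..<N} q \<Longrightarrow> \<omega> I \<in> polys N"
  unfolding forms_on_def polys_def by blast

lemma wsign_one: "(\<And>i j. i \<in> I \<Longrightarrow> j \<in> J \<Longrightarrow> i \<le> j) \<Longrightarrow> wsign I J = 1"
proof -
  assume h: "\<And>i j. i \<in> I \<Longrightarrow> j \<in> J \<Longrightarrow> i \<le> j"
  have "{(i, j). i \<in> I \<and> j \<in> J \<and> j < i} = {}" using h by fastforce
  then show ?thesis unfolding wsign_def by (metis card.empty power_0)
qed

lemma wsign_single_cong: "{j\<in>J. j < i} = {j\<in>J'. j < i} \<Longrightarrow> wsign {i} J = wsign {i} J'"
proof -
  assume h: "{j\<in>J. j < i} = {j\<in>J'. j < i}"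
  have "{(i', j). i' \<in> {i} \<and> j \<in> J \<and> j < i'} = {(i', j). i' \<in> {i} \<and> j \<in> J' \<and> j < i'}"
    using h by blast
  then show ?thesis unfolding wsign_def by metis
qed

lemma wedge_infinite: "infinite K \<Longrightarrow> wedge \<alpha> \<beta> K = 0"
  unfolding wedge_def by simp

lemma wedge_dpoly:
  assumes "finite K"
  shows "wedge (dpoly f) \<omega> K = (\<Sum>i\<in>K. wsign {i} (K - {i}) * pdiff i f * \<omega> (K - {i}))"
proof -
  have "wedge (dpoly f) \<omega> K = (\<Sum>I\<in>(\<lambda>i. {i}) ` K. wsign I (K - I) * dpoly f I * \<omega> (K - I))"
    unfolding wedge_def
  proof (rule sum.mono_neutral_right)
    show "finite (Pow K)" using assms by simp
    show "(\<lambda>i. {i}) ` K \<subseteq> Pow K" by auto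
    show "\<forall>I\<in>Pow K - (\<lambda>i. {i}) ` K. wsign I (K - I) * dpoly f I * \<omega> (K - I) = 0"
    proof
      fix I assume "I \<in> Pow K - (\<lambda>i. {i}) ` K"
      then have "card I \<noteq> 1" by (metis DiffE PowD card_1_singletonE image_eqI insert_subset)
      then show "wsign I (K - I) * dpoly f I * \<omega> (K - I) = 0" by (simp add: dpoly_def)
    qed
  qed
  also have "\<dots> = (\<Sum>i\<in>K. wsign {i} (K - {i}) * dpoly f {i} * \<omega> (K - {i}))"
    by (subst sum.reindex) (auto simp: inj_on_def)
  also have "\<dots> = (\<Sum>i\<in>K. wsign {i} (K - {i}) * pdiff i f * \<omega> (K - {i}))"
    by (simp add: dpoly_def)
  finally show ?thesis .
qed

lemma wedge_split:
  assumes a: "pure {..<n} \<alpha>" and b: "pure {n..<n+m} \<beta>"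
  shows "wedge \<alpha> \<beta> K = \<alpha> (K \<inter> {..<n}) * \<beta> (K - {..<n})"
proof (cases "finite K")
  case False
  then have "infinite (K - {..<n})" by (metis finite_Diff2 finite_lessThan)
  then have "\<not> (K - {..<n}) \<subseteq> {n..<n+m}" using finite_subset by blast
  then have "\<beta> (K - {..<n}) = 0" using b unfolding pure_def by blast
  then show ?thesis using False by (simp add: wedge_infinite)
next
  case True
  let ?I0 = "K \<inter> {..<n}"
  let ?F = "\<lambda>I. wsign I (K - I) * \<alpha> I * \<beta> (K - I)"
  have z: "?F I = 0" if "I \<in> Pow K" "I \<noteq> ?I0" for I
  proof (rule ccontr)
    assume "?F I \<noteq> 0"
    then have "\<alpha> I \<noteq> 0" "\<beta> (K - I) \<noteq> 0" by auto
    then have "I \<subseteq> {..<n}" "K - I \<subseteq> {n..<n+m}" using a b unfolding pure_def by auto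
    then have "I = ?I0" using that(1) by auto
    then show False using that(2) by simp
  qed
  have "wedge \<alpha> \<beta> K = (\<Sum>I\<in>Pow K. if I = ?I0 then ?F ?I0 else 0)"
    unfolding wedge_def by (intro sum.cong refl) (use z in auto)
  also have "\<dots> = ?F ?I0" using True by (simp add: sum.delta)
  also have "wsign ?I0 (K - ?I0) = 1" by (rule wsign_one) auto
  finally show ?thesis by (simp add: Diff_Int)
qed

lemma van_zero: "0 \<in> van_ideal N Z" by (simp add: van_ideal_def)
lemma van_add: "p \<in> van_ideal N Z \<Longrightarrow> q \<in> van_ideal N Z \<Longrightarrow> p + q \<in> van_ideal N Z"
  unfolding van_ideal_def by (auto simp: peval_add polys_add)
lemma van_mult: "r \<in> polys N \<Longrightarrow> p \<in> van_ideal N Z \<Longrightarrow> r * p \<in> van_ideal N Z"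
  unfolding van_ideal_def by (auto simp: peval_mult polys_mult)
lemma van_sum: "(\<And>a. a \<in> A \<Longrightarrow> f a \<in> van_ideal N Z) \<Longrightarrow> (\<Sum>a\<in>A. f a) \<in> van_ideal N Z"
  by (induction A rule: infinite_finite_induct) (auto simp: van_zero van_add)

lemma wedge_add2: "wedge \<alpha> (\<lambda>K. \<eta>1 K + \<eta>2 K) K = wedge \<alpha> \<eta>1 K + wedge \<alpha> \<eta>2 K"
  unfolding wedge_def by (simp add: distrib_left sum.distrib)
lemma wedge_zero2: "wedge \<alpha> (\<lambda>K. 0) K = 0"
  unfolding wedge_def by simp

lemma log_zero: "(\<lambda>K. 0) \<in> log_num N Z C q"
  unfolding log_num_def forms_on_def by (simp add: van_zero wedge_zero2)

lemma log_add:
  assumes "\<eta>1 \<in> log_num N Z C q" "\<eta>2 \<in> log_num N Z C q"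
  shows "(\<lambda>K. \<eta>1 K + \<eta>2 K) \<in> log_num N Z C q"
proof -
  have "(\<lambda>K. \<eta>1 K + \<eta>2 K) \<in> forms_on {..<N} q"
    using assms pvars_add unfolding log_num_def forms_on_def by (smt (verit) add.right_neutral mem_Collect_eq order_trans sup.bounded_iff)
  then show ?thesis using assms unfolding log_num_def
    by (auto simp: distrib_left wedge_add2 van_add)
qed

locale S =
  fixes n m k :: nat and Z C0 :: "(nat \<Rightarrow> complex) set" and hs :: "nat \<Rightarrow> mpoly"
  assumes Zc: "Z \<subseteq> cspace n" and Cc: "C0 \<subseteq> cspace n" and hs: "\<forall>j<k. hs j \<in> polys n"
    and eqn: "van_ideal n C0 = gen_ideal n hs k"
    and eqnm: "van_ideal (n+m) (prod_set n m C0) = gen_ideal (n+m) hs k"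
begin

lemma L1:
  assumes f: "f \<in> van_ideal (n+m) (prod_set n m Z)" and a: "\<alpha> \<in> log_num n Z C0 j"
  shows "f * \<alpha> I \<in> gen_ideal (n+m) hs k"
proof -
  have fp: "f \<in> polys (n+m)" using f unfolding van_ideal_def by auto
  have ap: "\<alpha> I \<in> polys n" using a unfolding log_num_def by (auto intro: forms_polys)
  have p: "f * \<alpha> I \<in> polys (n+m)" using fp ap polys_mono[of n "n+m"] by (auto intro: polys_mult)
  have "cf n b (f * \<alpha> I) \<in> gen_ideal n hs k" for b
  proof -
    have "cf n b (f * \<alpha> I) = cf n b f * \<alpha> I" using cf_mult[OF ap] by (simp add: mult.commute)
    moreover have "cf n b f \<in> van_ideal n Z" by (rule van_cf[OF Zc f])
    ultimately show ?thesis using a eqn unfolding log_num_def by auto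
  qed
  then show ?thesis using gen_A[OF hs p] by blast
qed

lemma L2:
  assumes f: "f \<in> van_ideal (n+m) (prod_set n m Z)" and a: "\<alpha> \<in> log_num n Z C0 j" and L: "finite L"
    and LX: "L \<subseteq> {..<n}"
  shows "wedge (dpoly f) \<alpha> L \<in> gen_ideal (n+m) hs k"
proof -
  have fp: "f \<in> polys (n+m)" using f unfolding van_ideal_def by auto
  have ap: "\<alpha> I \<in> polys n" for I using a unfolding log_num_def by (auto intro: forms_polys)
  have ap': "\<alpha> I \<in> polys (n+m)" for I using ap polys_mono[of n "n+m"] by auto
  have e: "wedge (dpoly g) \<alpha> L = (\<Sum>i\<in>L. (wsign {i} (L - {i}) * \<alpha> (L - {i})) * pdiff i g)" for g
    unfolding wedge_dpoly[OF L] by (simp add: ac_simps)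
  have p: "wedge (dpoly f) \<alpha> L \<in> polys (n+m)"
    unfolding e by (intro polys_sum polys_mult wsign_polys ap' polys_pdiff fp)
  have "cf n b (wedge (dpoly f) \<alpha> L) \<in> gen_ideal n hs k" for b
  proof -
    have "cf n b (wedge (dpoly f) \<alpha> L) = wedge (dpoly (cf n b f)) \<alpha> L"
      unfolding e cf_sum
    proof (intro sum.cong refl)
      fix i assume "i \<in> L"
      then have i: "i < n" using LX by auto
      show "cf n b (wsign {i} (L - {i}) * \<alpha> (L - {i}) * pdiff i f) = wsign {i} (L - {i}) * \<alpha> (L - {i}) * pdiff i (cf n b f)"
        by (subst cf_mult) (auto intro: polys_mult wsign_polys ap simp: cf_pdiff_x[OF i])
    qed
    moreover have "cf n b f \<in> van_ideal n Z" by (rule van_cf[OF Zc f])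
    ultimately show ?thesis using a eqn unfolding log_num_def by auto
  qed
  then show ?thesis using gen_A[OF hs p] by blast
qed

lemma L3:
  assumes f: "f \<in> van_ideal (n+m) (prod_set n m Z)" and a: "\<alpha> \<in> log_num n Z C0 j" and i: "n \<le> i"
  shows "pdiff i f * \<alpha> I \<in> gen_ideal (n+m) hs k"
proof -
  have fp: "f \<in> polys (n+m)" using f unfolding van_ideal_def by auto
  have ap: "\<alpha> I \<in> polys n" using a unfolding log_num_def by (auto intro: forms_polys)
  have p: "pdiff i f * \<alpha> I \<in> polys (n+m)" using fp ap polys_mono[of n "n+m"] by (auto intro: polys_mult polys_pdiff)
  have "cf n b (pdiff i f * \<alpha> I) \<in> gen_ideal n hs k" for b
  proof -
    have "cf n b (pdiff i f * \<alpha> I) = cf n b (\<alpha> I * pdiff i f)" by (simp only: mult.commute)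
    also have "\<dots> = \<alpha> I * cf n b (pdiff i f)" by (rule cf_mult[OF ap])
    also have "\<dots> = (of_nat (lk b i + 1) * cf n (b + sg i 1) f) * \<alpha> I"
      by (simp only: cf_pdiff_y[OF i] mult.commute)
    finally have "cf n b (pdiff i f * \<alpha> I) = (of_nat (lk b i + 1) * cf n (b + sg i 1) f) * \<alpha> I" .
    moreover have "of_nat (lk b i + 1) * cf n (b + sg i 1) f \<in> van_ideal n Z"
      by (rule van_mult[OF polys_of_nat van_cf[OF Zc f]])
    ultimately show ?thesis using a eqn unfolding log_num_def by auto
  qed
  then show ?thesis using gen_A[OF hs p] by blast
qed

lemma tens_log:
  assumes a: "\<alpha> \<in> log_num n Z C0 j" and b: "\<beta> \<in> forms_on {n..<n+m} (q - j)" and jq: "j \<le> q"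
  shows "(\<lambda>K. wedge \<alpha> \<beta> K) \<in> log_num (n+m) (prod_set n m Z) (prod_set n m C0) q"
proof -
  have af: "\<alpha> \<in> forms_on {..<n} j" using a unfolding log_num_def by auto
  have pa: "pure {..<n} \<alpha>" using forms_pure[OF af] .
  have pb: "pure {n..<n+m} \<beta>" using forms_pure[OF b] .
  have ws: "wedge \<alpha> \<beta> K = \<alpha> (K \<inter> {..<n}) * \<beta> (K - {..<n})" for K by (rule wedge_split[OF pa pb])
  have ap: "\<alpha> I \<in> polys n" for I using af by (rule forms_polys)
  have bp: "\<beta> I \<in> polys (n+m)" for I using b unfolding forms_on_def polys_def by fastforce
  have G: "gen_ideal (n+m) hs k = van_ideal (n+m) (prod_set n m C0)" using eqnm by simp
  have forms: "(\<lambda>K. wedge \<alpha> \<beta> K) \<in> forms_on {..<n+m} q"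
    unfolding forms_on_def
  proof (intro CollectI allI conjI impI)
    fix K assume "wedge \<alpha> \<beta> K \<noteq> 0"
    then have nz: "\<alpha> (K \<inter> {..<n}) \<noteq> 0" "\<beta> (K - {..<n}) \<noteq> 0" by (auto simp: ws)
    then have x: "finite (K \<inter> {..<n})" "card (K \<inter> {..<n}) = j" using af unfolding forms_on_def by auto
    have y: "K - {..<n} \<subseteq> {n..<n+m}" "finite (K - {..<n})" "card (K - {..<n}) = q - j"
      using nz b unfolding forms_on_def by auto
    have Ku: "K = (K \<inter> {..<n}) \<union> (K - {..<n})" by auto
    show "K \<subseteq> {..<n+m}" using y(1) by auto
    show "finite K" using x y by (subst Ku) auto
    have "card K = card (K \<inter> {..<n}) + card (K - {..<n})"
      using x y by (subst Ku, subst card_Un_disjoint) auto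
    then show "card K = q" using x y jq by simp
  next
    fix K
    have "\<alpha> (K \<inter> {..<n}) \<in> polys (n+m)" using polys_mono[of n "n+m"] ap by auto
    then have "wedge \<alpha> \<beta> K \<in> polys (n+m)" unfolding ws using bp polys_mult by blast
    then show "pvars (wedge \<alpha> \<beta> K) \<subseteq> {..<n+m}" unfolding polys_def by auto
  qed
  have c1: "f * wedge \<alpha> \<beta> K \<in> van_ideal (n+m) (prod_set n m C0)"
    if f: "f \<in> van_ideal (n+m) (prod_set n m Z)" for f K
  proof -
    have "f * wedge \<alpha> \<beta> K = \<beta> (K - {..<n}) * (f * \<alpha> (K \<inter> {..<n}))" by (simp add: ws ac_simps)
    also have "\<dots> \<in> gen_ideal (n+m) hs k" by (rule gen_mult[OF bp L1[OF f a]])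
    finally show ?thesis using G by simp
  qed
  have c2: "wedge (dpoly f) (\<lambda>K. wedge \<alpha> \<beta> K) K \<in> van_ideal (n+m) (prod_set n m C0)"
    if f: "f \<in> van_ideal (n+m) (prod_set n m Z)" for f K
  proof (cases "finite K")
    case False then show ?thesis by (simp add: wedge_infinite van_zero)
  next
    case True
    let ?X = "K \<inter> {..<n}" and ?Y = "K - {..<n}"
    let ?t = "\<lambda>i. wsign {i} (K - {i}) * pdiff i f * wedge \<alpha> \<beta> (K - {i})"
    have "wedge (dpoly f) (\<lambda>K. wedge \<alpha> \<beta> K) K = (\<Sum>i\<in>K. ?t i)" by (rule wedge_dpoly[OF True])
    also have "\<dots> = (\<Sum>i\<in>?X. ?t i) + (\<Sum>i\<in>?Y. ?t i)"
    proof -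
      have e: "?X \<union> ?Y = K" by auto
      have "(\<Sum>i\<in>?X \<union> ?Y. ?t i) = (\<Sum>i\<in>?X. ?t i) + (\<Sum>i\<in>?Y. ?t i)"
        by (rule sum.union_disjoint) (use True in auto)
      then show ?thesis unfolding e .
    qed
    also have "\<dots> \<in> gen_ideal (n+m) hs k"
    proof (rule gen_add)
      have "(\<Sum>i\<in>?X. ?t i) = \<beta> ?Y * wedge (dpoly f) \<alpha> ?X"
        unfolding wedge_dpoly[of ?X, OF finite_Int[OF disjI1[OF True]]] sum_distrib_left
      proof (intro sum.cong refl)
        fix i assume i: "i \<in> ?X"
        have 1: "(K - {i}) \<inter> {..<n} = ?X - {i}" by auto
        have 2: "(K - {i}) - {..<n} = ?Y" using i by auto
        have 3: "wsign {i} (K - {i}) = wsign {i} (?X - {i})"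
          by (rule wsign_single_cong) (use i in auto)
        show "?t i = \<beta> ?Y * (wsign {i} (?X - {i}) * pdiff i f * \<alpha> (?X - {i}))"
          by (simp only: ws 1 2 3) (simp add: ac_simps)
      qed
      also have "\<dots> \<in> gen_ideal (n+m) hs k"
        by (rule gen_mult[OF bp L2[OF f a]]) (use True in auto)
      finally show "(\<Sum>i\<in>?X. ?t i) \<in> gen_ideal (n+m) hs k" .
    next
      show "(\<Sum>i\<in>?Y. ?t i) \<in> gen_ideal (n+m) hs k"
      proof (rule gen_sum)
        fix i assume i: "i \<in> ?Y"
        have 1: "(K - {i}) \<inter> {..<n} = ?X" using i by auto
        have 2: "(K - {i}) - {..<n} = ?Y - {i}" by auto
        have "?t i = (wsign {i} (K - {i}) * \<beta> (?Y - {i})) * (pdiff i f * \<alpha> ?X)"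
          by (simp only: ws 1 2) (simp add: ac_simps)
        also have "\<dots> \<in> gen_ideal (n+m) hs k"
          by (rule gen_mult[OF polys_mult[OF wsign_polys bp] L3[OF f a]]) (use i in auto)
        finally show "?t i \<in> gen_ideal (n+m) hs k" .
      qed
    qed
    finally show ?thesis using G by simp
  qed
  show ?thesis unfolding log_num_def using forms c1 c2 by blast
qed

lemma tensor_sub_log: "tensor_num n m Z C0 q \<subseteq> log_num (n+m) (prod_set n m Z) (prod_set n m C0) q"
proof
  fix \<omega> assume "\<omega> \<in> tensor_num n m Z C0 q"
  then obtain ps where ps: "\<forall>(j, \<alpha>, \<beta>) \<in> set ps. j \<le> q \<and> \<alpha> \<in> log_num n Z C0 j \<and> \<beta> \<in> forms_on {n..<n+m} (q - j)"
    and w: "\<omega> = (\<lambda>K. sum_list (map (\<lambda>(j, \<alpha>, \<beta>). wedge \<alpha> \<beta> K) ps))"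
    unfolding tensor_num_def by blast
  have "(\<lambda>K. sum_list (map (\<lambda>(j, \<alpha>, \<beta>). wedge \<alpha> \<beta> K) ps)) \<in> log_num (n+m) (prod_set n m Z) (prod_set n m C0) q"
    using ps
  proof (induction ps)
    case Nil then show ?case by (simp add: log_zero)
  next
    case (Cons x ps)
    obtain j \<alpha> \<beta> where x: "x = (j, \<alpha>, \<beta>)" by (cases x) auto
    have "(\<lambda>K. wedge \<alpha> \<beta> K) \<in> log_num (n+m) (prod_set n m Z) (prod_set n m C0) q"
      using Cons.prems x by (intro tens_log) auto
    then show ?case using log_add[OF _ Cons.IH] Cons.prems x by simp
  qed
  then show "\<omega> \<in> log_num (n+m) (prod_set n m Z) (prod_set n m C0) q" using w by simp
qed

end

context S begin

lemma log_sub_tensor: "log_num (n+m) (prod_set n m Z) (prod_set n m C0) q \<subseteq> tensor_num n m Z C0 q"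
proof
  fix \<eta> assume eta: "\<eta> \<in> log_num (n+m) (prod_set n m Z) (prod_set n m C0) q"
  have ef: "\<eta> \<in> forms_on {..<n+m} q" using eta unfolding log_num_def by auto
  have ep: "\<eta> K \<in> polys (n+m)" for K using ef by (rule forms_polys)
  have e1: "f * \<eta> I \<in> van_ideal (n+m) (prod_set n m C0)" if "f \<in> van_ideal (n+m) (prod_set n m Z)" for f I
    using eta that unfolding log_num_def by auto
  have e2: "wedge (dpoly f) \<eta> K \<in> van_ideal (n+m) (prod_set n m C0)" if "f \<in> van_ideal (n+m) (prod_set n m Z)" for f K
    using eta that unfolding log_num_def by auto
  define JS where "JS = {J. J \<subseteq> {n..<n+m} \<and> card J \<le> q}"
  define BS where "BS = (\<Union>K\<in>Pow {..<n+m}. ypart n ` ks (\<eta> K))"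
  define \<alpha> where "\<alpha> (J::nat set) (b::nat\<Rightarrow>\<^sub>0nat) (I::nat set) = (if I \<subseteq> {..<n} then cf n b (\<eta> (I \<union> J)) else 0)" for J b I
  define \<beta> where "\<beta> (J::nat set) (b::nat\<Rightarrow>\<^sub>0nat) (L::nat set) = (if L = J then sg b (1::complex) else 0)" for J b L
  have finJS: "finite JS" unfolding JS_def by (rule finite_subset[of _ "Pow {n..<n+m}"]) auto
  have finBS: "finite BS" unfolding BS_def by auto
  obtain xs where xs: "set xs = JS \<times> BS" "distinct xs"
    using finite_distinct_list[of "JS \<times> BS"] finJS finBS by blast
  define ps where "ps = map (\<lambda>(J, b). (q - card J, \<alpha> J b, \<beta> J b)) xs"
  have pa: "pure {..<n} (\<alpha> J b)" for J b unfolding pure_def \<alpha>_def by auto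
  have pb: "J \<in> JS \<Longrightarrow> pure {n..<n+m} (\<beta> J b)" for J b unfolding pure_def \<beta>_def JS_def by auto
  have beta_ok: "\<beta> J b \<in> forms_on {n..<n+m} (q - (q - card J))" if J: "J \<in> JS" and b: "b \<in> BS" for J b
  proof -
    have JY: "J \<subseteq> {n..<n+m}" and cJ: "card J \<le> q" using J unfolding JS_def by auto
    have fJ: "finite J" using JY finite_subset by blast
    obtain K a where K: "K \<subseteq> {..<n+m}" "a \<in> ks (\<eta> K)" "b = ypart n a" using b unfolding BS_def by auto
    have kb: "ks b \<subseteq> {n..<n+m}" using ypart_keys_polys[OF ep[of K]] K by blast
    show ?thesis unfolding forms_on_def \<beta>_def
      using JY fJ cJ kb pvars_single[of b 1] by auto
  qed
  have alpha_ok: "\<alpha> J b \<in> log_num n Z C0 (q - card J)" if J: "J \<in> JS" for J b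
  proof -
    have JY: "J \<subseteq> {n..<n+m}" and cJ: "card J \<le> q" using J unfolding JS_def by auto
    have fJ: "finite J" using JY finite_subset by blast
    have forms: "\<alpha> J b \<in> forms_on {..<n} (q - card J)"
      unfolding forms_on_def
    proof (intro CollectI allI conjI impI)
      fix I assume nz: "\<alpha> J b I \<noteq> 0"
      then have IX: "I \<subseteq> {..<n}" and "cf n b (\<eta> (I \<union> J)) \<noteq> 0" unfolding \<alpha>_def by (auto split: if_splits)
      then have "\<eta> (I \<union> J) \<noteq> 0" by auto
      then have fi: "finite (I \<union> J)" "card (I \<union> J) = q" using ef unfolding forms_on_def by auto
      show "I \<subseteq> {..<n}" by fact
      show fI: "finite I" using fi by auto
      have "I \<inter> J = {}" using IX JY by fastforce
      then have "card (I \<union> J) = card I + card J" using fI fJ by (simp add: card_Un_disjoint)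
      then show "card I = q - card J" using fi by simp
    next
      fix I show "pvars (\<alpha> J b I) \<subseteq> {..<n}"
        unfolding \<alpha>_def using cf_polys unfolding polys_def by auto
    qed
    have c1: "f * \<alpha> J b I \<in> van_ideal n C0" if f: "f \<in> van_ideal n Z" for f I
    proof (cases "I \<subseteq> {..<n}")
      case True
      have fp: "f \<in> polys n" using f unfolding van_ideal_def by auto
      have "f * \<alpha> J b I = cf n b (f * \<eta> (I \<union> J))" using True by (simp add: \<alpha>_def cf_mult[OF fp])
      also have "\<dots> \<in> van_ideal n C0" by (rule van_cf[OF Cc e1[OF van_sub[OF f Zc]]])
      finally show ?thesis .
    next
      case False then show ?thesis by (simp add: \<alpha>_def van_zero)
    qed
    have c2: "wedge (dpoly f) (\<alpha> J b) K \<in> van_ideal n C0" if f: "f \<in> van_ideal n Z" for f K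
    proof (cases "finite K")
      case False then show ?thesis by (simp add: wedge_infinite van_zero)
    next
      case fK: True
      have fp: "f \<in> polys n" using f unfolding van_ideal_def by auto
      have pd0: "n \<le> i \<Longrightarrow> pdiff i f = 0" for i
        by (rule pdiff_notvar) (use fp in \<open>auto simp: polys_def\<close>)
      show ?thesis
      proof (cases "K \<subseteq> {..<n}")
        case KX: True
        have KJ: "K \<inter> J = {}" using KX JY by fastforce
        let ?t = "\<lambda>i. wsign {i} ((K \<union> J) - {i}) * pdiff i f * \<eta> ((K \<union> J) - {i})"
        have "wedge (dpoly f) \<eta> (K \<union> J) = (\<Sum>i\<in>K \<union> J. ?t i)" by (rule wedge_dpoly) (use fK fJ in auto)
        also have "\<dots> = (\<Sum>i\<in>K. ?t i) + (\<Sum>i\<in>J. ?t i)" by (rule sum.union_disjoint) (use fK fJ KJ in auto)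
        also have "(\<Sum>i\<in>J. ?t i) = 0" using JY pd0 by (intro sum.neutral) auto
        finally have W: "wedge (dpoly f) \<eta> (K \<union> J) = (\<Sum>i\<in>K. ?t i)" by simp
        have "wedge (dpoly f) (\<alpha> J b) K = cf n b (wedge (dpoly f) \<eta> (K \<union> J))"
          unfolding W cf_sum wedge_dpoly[OF fK]
        proof (intro sum.cong refl)
          fix i assume i: "i \<in> K"
          have in_: "i < n" using i KX by auto
          have 1: "(K \<union> J) - {i} = (K - {i}) \<union> J" using i KJ by auto
          have 2: "wsign {i} ((K \<union> J) - {i}) = wsign {i} (K - {i})"
            by (rule wsign_single_cong) (use JY in_ in auto)
          have 3: "K - {i} \<subseteq> {..<n}" using KX by auto
          have 4: "wsign {i} ((K - {i}) \<union> J) = wsign {i} (K - {i})"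
            by (rule wsign_single_cong) (use JY in_ in auto)
          show "wsign {i} (K - {i}) * pdiff i f * \<alpha> J b (K - {i}) = cf n b (?t i)"
            unfolding 2 1 using 3
            by (simp add: \<alpha>_def cf_mult polys_mult wsign_polys polys_pdiff fp 4)
        qed
        also have "\<dots> \<in> van_ideal n C0" by (rule van_cf[OF Cc e2[OF van_sub[OF f Zc]]])
        finally show ?thesis .
      next
        case False
        then obtain e where e: "e \<in> K" "n \<le> e" by (meson lessThan_iff not_le subsetI)
        have "wedge (dpoly f) (\<alpha> J b) K = 0"
          unfolding wedge_dpoly[OF fK]
        proof (intro sum.neutral ballI)
          fix i assume "i \<in> K"
          show "wsign {i} (K - {i}) * pdiff i f * \<alpha> J b (K - {i}) = 0"
          proof (cases "i = e")
            case True then show ?thesis using pd0 e by simp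
          next
            case False
            then have "\<not> K - {i} \<subseteq> {..<n}" using e by auto
            then show ?thesis by (simp add: \<alpha>_def)
          qed
        qed
        then show ?thesis by (simp add: van_zero)
      qed
    qed
    show ?thesis unfolding log_num_def using forms c1 c2 by blast
  qed
  show "\<eta> \<in> tensor_num n m Z C0 q" unfolding tensor_num_def
  proof (intro CollectI exI[of _ ps] conjI)
    show "\<forall>(j, a, bb) \<in> set ps. j \<le> q \<and> a \<in> log_num n Z C0 j \<and> bb \<in> forms_on {n..<n+m} (q - j)"
      unfolding ps_def using xs(1) alpha_ok beta_ok by auto
    show "\<eta> = (\<lambda>K. sum_list (map (\<lambda>(j, a, bb). wedge a bb K) ps))"
    proof
      fix K
      have "sum_list (map (\<lambda>(j, a, bb). wedge a bb K) ps) = sum_list (map (\<lambda>(J, b). wedge (\<alpha> J b) (\<beta> J b) K) xs)"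
        unfolding ps_def by (simp add: comp_def split_def)
      also have "\<dots> = (\<Sum>p\<in>JS \<times> BS. (\<lambda>(J, b). wedge (\<alpha> J b) (\<beta> J b) K) p)"
        using sum_list_distinct_conv_sum_set[OF xs(2)] xs(1) by simp
      also have "\<dots> = (\<Sum>J\<in>JS. \<Sum>b\<in>BS. wedge (\<alpha> J b) (\<beta> J b) K)"
        by (simp add: sum.cartesian_product)
      also have "\<dots> = (\<Sum>J\<in>JS. if K - {..<n} = J then (\<Sum>b\<in>BS. sg b 1 * cf n b (\<eta> K)) else 0)"
      proof (intro sum.cong refl)
        fix J assume J: "J \<in> JS"
        have "wedge (\<alpha> J b) (\<beta> J b) K = (if K - {..<n} = J then sg b 1 * cf n b (\<eta> K) else 0)" for b
        proof -
          have u: "K \<inter> {..<n} \<union> (K - {..<n}) = K" by auto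
          show ?thesis
          proof (cases "K - {..<n} = J")
            case True
            then have "K \<inter> {..<n} \<union> J = K" using u by simp
            then show ?thesis using True unfolding wedge_split[OF pa pb[OF J]] unfolding \<alpha>_def \<beta>_def by (simp add: mult.commute)
          next
            case False then show ?thesis unfolding wedge_split[OF pa pb[OF J]] unfolding \<beta>_def by simp
          qed
        qed
        then show "(\<Sum>b\<in>BS. wedge (\<alpha> J b) (\<beta> J b) K) = (if K - {..<n} = J then (\<Sum>b\<in>BS. sg b 1 * cf n b (\<eta> K)) else 0)"
          by simp
      qed
      also have "\<dots> = (if K - {..<n} \<in> JS then (\<Sum>b\<in>BS. sg b 1 * cf n b (\<eta> K)) else 0)"
        using finJS by (simp add: sum.delta)
      also have "\<dots> = \<eta> K"
      proof (cases "K - {..<n} \<in> JS")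
        case True
        then have "K \<subseteq> {..<n+m}" unfolding JS_def by auto
        then have "ypart n ` ks (\<eta> K) \<subseteq> BS" unfolding BS_def by auto
        then show ?thesis using True cf_decomp[OF finBS] by simp
      next
        case False
        have "\<eta> K = 0"
        proof (rule ccontr)
          assume "\<eta> K \<noteq> 0"
          then have K: "K \<subseteq> {..<n+m}" "finite K" "card K = q" using ef unfolding forms_on_def by auto
          have "card (K - {..<n}) \<le> q" using K card_mono[of K "K - {..<n}"] by auto
          then have "K - {..<n} \<in> JS" using K unfolding JS_def by auto
          then show False using False by simp
        qed
        then show ?thesis using False by simp
      qed
      finally show "\<eta> K = sum_list (map (\<lambda>(j, a, bb). wedge a bb K) ps)" by simp
    qed
  qed
qed

end

theorem proposition4p8:
  fixes n m k :: nat and Z C0 :: "(nat \<Rightarrow> complex) set" and hs :: "nat \<Rightarrow> mpoly"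
  assumes "n \<ge> 1" and "m \<ge> 1"
    and "subspace_arrangement n k Z"
    and "reduced_CI n k C0 hs"
    and "Z \<subseteq> C0"
  shows "reduced_CI (n + m) k (prod_set n m C0) hs \<and> prod_set n m Z \<subseteq> prod_set n m C0 \<and>
         (\<forall>q. log_num (n + m) (prod_set n m Z) (prod_set n m C0) q = tensor_num n m Z C0 q)"
proof -
  have Zc: "Z \<subseteq> cspace n" using assms(3) by (rule arr_cspace)
  have arr: "subspace_arrangement n k C0" and eqn: "van_ideal n C0 = gen_ideal n hs k"
    and reg: "regular_seq n hs k"
    using assms(4) unfolding reduced_CI_def by auto
  have Cc: "C0 \<subseteq> cspace n" using arr by (rule arr_cspace)
  have hs: "\<forall>j<k. hs j \<in> polys n" using reg unfolding regular_seq_def by auto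
  have c1: "reduced_CI (n + m) k (prod_set n m C0) hs" by (rule conj1[OF assms(4)])
  then have eqnm: "van_ideal (n+m) (prod_set n m C0) = gen_ideal (n+m) hs k"
    unfolding reduced_CI_def by auto
  interpret S n m k Z C0 hs
    by unfold_locales (use Zc Cc hs eqn eqnm in auto)
  have c2: "prod_set n m Z \<subseteq> prod_set n m C0" using assms(5) unfolding prod_set_def by auto
  have c3: "\<forall>q. log_num (n + m) (prod_set n m Z) (prod_set n m C0) q = tensor_num n m Z C0 q"
    using log_sub_tensor tensor_sub_log by blast
  show ?thesis using c1 c2 c3 by blast
qed

end
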